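(* Let $R$ be a commutative domain with unit, let $f\in R$ be nonzero and non-invertible, and let $S=R[u,v]/(uv-f)$. Then the following are equivalent: the image of $u$ is a prime element of $S$; the image of $v$ is a prime element of $S$; $f$ is a prime element of $R$.
   Context: A nonzero non-invertible element $r$ of a domain is prime if whenever $r$ divides a product $ab$, it divides $a$ or $b$. *)

theory Defs
  imports "HOL-Computational_Algebra.Computational_Algebra"
begin

text \<open>R[u,v] is modelled as the iterated polynomial ring (R[u])[v], i.e. type 'a poly poly:
  the inner variable is u, the outer variable is v.\<close>

definition var_u :: "'a::comm_ring_1 poly poly" where
  "var_u = [:[:0, 1:]:]"

definition var_v :: "'a::comm_ring_1 poly poly" where
  "var_v = [:0, 1:]"

definition uv_rel :: "'a::comm_ring_1 \<Rightarrow> 'a poly poly" where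
  "uv_rel f = var_u * var_v - [:[:f:]:]"

text \<open>Divisibility in the quotient ring A/(m), expressed on representatives:
  the class of x divides the class of a iff a - x*c is in the ideal (m) for some c.\<close>

definition dvd_mod :: "'b::comm_ring_1 \<Rightarrow> 'b \<Rightarrow> 'b \<Rightarrow> bool" where
  "dvd_mod m x a \<longleftrightarrow> (\<exists>c. m dvd (a - x * c))"

definition prime_mod :: "'b::comm_ring_1 \<Rightarrow> 'b \<Rightarrow> bool" where
  "prime_mod m x \<longleftrightarrow> \<not> m dvd x \<and> \<not> dvd_mod m x 1 \<and>
     (\<forall>a b. dvd_mod m x (a * b) \<longrightarrow> dvd_mod m x a \<or> dvd_mod m x b)"

end

theory Submission
  imports Defs
begin

definition phi :: "'a::comm_ring_1 poly poly \<Rightarrow> 'a poly" where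
  "phi P = map_poly (\<lambda>p. coeff p 0) P"

definition iota :: "'a::comm_ring_1 poly \<Rightarrow> 'a poly poly" where
  "iota g = map_poly (\<lambda>a. [:a:]) g"

lemma coeff_phi: "coeff (phi P) n = coeff (coeff P n) 0"
  by (simp add: phi_def coeff_map_poly)

lemma coeff_iota: "coeff (iota g) n = [:coeff g n:]"
  by (simp add: iota_def coeff_map_poly)

lemma phi_mult: "phi (P * Q) = phi P * phi Q"
  by (rule poly_eqI) (simp add: coeff_phi coeff_mult coeff_sum coeff_mult_0)

lemma phi_diff: "phi (P - Q) = phi P - phi Q"
  by (rule poly_eqI) (simp add: coeff_phi)

lemma phi_one: "phi 1 = 1"
  by (simp add: phi_def)

lemma phi_iota: "phi (iota g) = g"
  by (rule poly_eqI) (simp add: coeff_phi coeff_iota)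

lemma phi_U: "phi (var_u :: 'a::comm_ring_1 poly poly) = 0"
  by (rule poly_eqI) (simp add: coeff_phi var_u_def coeff_pCons split: nat.splits)

lemma phi_V: "phi (var_v :: 'a::comm_ring_1 poly poly) = [:0,1:]"
  by (rule poly_eqI) (simp add: coeff_phi var_v_def coeff_pCons split: nat.splits)

lemma phi_C: "phi [:[:f:]:] = [:f:]"
  by (rule poly_eqI) (simp add: coeff_phi coeff_pCons split: nat.splits)

lemma phi_m: "phi (uv_rel f) = - [:f:]"
  by (simp add: uv_rel_def phi_diff phi_mult phi_U phi_C)

lemma coeff0_m: "coeff (uv_rel f) 0 = - [:f:]"
  by (simp add: uv_rel_def coeff_mult_0 var_v_def)

lemma m_eq: "[:[:f:]:] = var_u * var_v - uv_rel f"
  by (simp add: uv_rel_def)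

lemma dvd_mod_u:
  fixes f :: "'a::idom"
  shows "dvd_mod (uv_rel f) var_u P \<longleftrightarrow> [:f:] dvd phi P"
proof
  assume "dvd_mod (uv_rel f) var_u P"
  then obtain c d where "P - var_u * c = uv_rel f * d" unfolding dvd_mod_def dvd_def by blast
  then have "phi (P - var_u * c) = phi (uv_rel f * d)" by simp
  then have "phi P = [:f:] * (- phi d)" by (simp add: phi_diff phi_mult phi_U phi_m)
  then show "[:f:] dvd phi P" by (metis dvd_triv_left)
next
  assume "[:f:] dvd phi P"
  then obtain g where g: "phi P = [:f:] * g" by blast
  have "var_u dvd (P - iota (phi P))"
    unfolding var_u_def const_poly_dvd_iff
  proof
    fix n
    have "[:0, 1:] dvd coeff P n - [:coeff (coeff P n) 0:]"
      using dvd_iff_poly_eq_0[of 0 "coeff P n - [:coeff (coeff P n) 0:]"]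
      by (simp add: poly_0_coeff_0)
    then show "[:0, 1:] dvd coeff (P - iota (phi P)) n"
      by (simp add: coeff_iota coeff_phi)
  qed
  then obtain W where W: "P - iota (phi P) = var_u * W" by blast
  have "iota (phi P) = [:[:f:]:] * iota g"
    by (rule poly_eqI) (simp add: g coeff_iota)
  also have "\<dots> = (var_u * var_v - uv_rel f) * iota g" by (simp add: uv_rel_def)
  finally have H: "iota (phi P) = (var_u * var_v - uv_rel f) * iota g" .
  have "P = var_u * W + iota (phi P)" using W by (simp add: algebra_simps)
  then have "P = var_u * W + (var_u * var_v - uv_rel f) * iota g" using H by simp
  then have "P - var_u * (W + var_v * iota g) = uv_rel f * (- iota g)"
    by (simp add: algebra_simps)
  then show "dvd_mod (uv_rel f) var_u P" unfolding dvd_mod_def by (metis dvd_triv_left)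
qed

lemma dvd_mod_v:
  fixes f :: "'a::idom"
  shows "dvd_mod (uv_rel f) var_v P \<longleftrightarrow> [:f:] dvd coeff P 0"
proof
  assume "dvd_mod (uv_rel f) var_v P"
  then obtain c d where "P - var_v * c = uv_rel f * d" unfolding dvd_mod_def dvd_def by blast
  then have "coeff (P - var_v * c) 0 = coeff (uv_rel f * d) 0" by simp
  then have "coeff P 0 = [:f:] * (- coeff d 0)"
    by (simp add: coeff_mult_0 coeff0_m var_v_def)
  then show "[:f:] dvd coeff P 0" by (metis dvd_triv_left)
next
  assume "[:f:] dvd coeff P 0"
  then obtain g where g: "coeff P 0 = [:f:] * g" by blast
  have "var_v dvd (P - [:coeff P 0:])"
    using dvd_iff_poly_eq_0[of 0 "P - [:coeff P 0:]"]
    by (simp add: poly_0_coeff_0 var_v_def)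
  then obtain W where W: "P - [:coeff P 0:] = var_v * W" by blast
  have "[:coeff P 0:] = [:[:f:]:] * [:g:]" by (simp add: g)
  also have "\<dots> = (var_u * var_v - uv_rel f) * [:g:]" by (simp add: uv_rel_def)
  finally have H: "[:coeff P 0:] = (var_u * var_v - uv_rel f) * [:g:]" .
  have "P = var_v * W + [:coeff P 0:]" using W by (simp add: algebra_simps)
  then have "P = var_v * W + (var_u * var_v - uv_rel f) * [:g:]" using H by simp
  then have "P - var_v * (W + var_u * [:g:]) = uv_rel f * (- [:g:])"
    by (simp add: algebra_simps)
  then show "dvd_mod (uv_rel f) var_v P" unfolding dvd_mod_def by (metis dvd_triv_left)
qed

lemma generic:
  fixes f :: "'a::idom" and h :: "'b::comm_ring_1 \<Rightarrow> 'a poly"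
  assumes dm: "\<And>P. dvd_mod m x P \<longleftrightarrow> [:f:] dvd h P"
    and hm: "\<And>P Q. h (P * Q) = h P * h Q" and h1: "h 1 = 1"
    and hs: "\<And>g. h (s g) = g" and nd: "\<not> m dvd x" and f0: "f \<noteq> 0"
  shows "prime_mod m x \<longleftrightarrow> prime_elem f"
proof -
  have "prime_mod m x \<longleftrightarrow> prime_elem [:f:]"
  proof
    assume p: "prime_mod m x"
    show "prime_elem [:f:]" unfolding prime_elem_def
    proof (intro conjI allI impI)
      show "[:f:] \<noteq> 0" using f0 by simp
      show "\<not> [:f:] dvd 1" using p dm[of 1] h1 unfolding prime_mod_def by simp
      fix a b assume "[:f:] dvd a * b"
      then have "dvd_mod m x (s a * s b)" using dm hm hs by simp
      then have "dvd_mod m x (s a) \<or> dvd_mod m x (s b)" using p unfolding prime_mod_def by blast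
      then show "[:f:] dvd a \<or> [:f:] dvd b" using dm hs by simp
    qed
  next
    assume p: "prime_elem [:f:]"
    show "prime_mod m x" unfolding prime_mod_def
    proof (intro conjI allI impI)
      show "\<not> m dvd x" by fact
      show "\<not> dvd_mod m x 1" using p dm[of 1] h1 unfolding prime_elem_def by simp
      fix a b assume "dvd_mod m x (a * b)"
      then have "[:f:] dvd h a * h b" using dm hm by simp
      then show "dvd_mod m x a \<or> dvd_mod m x b" using p dm unfolding prime_elem_def by blast
    qed
  qed
  then show ?thesis by (simp add: prime_elem_const_poly_iff)
qed

theorem proposition1p6:
  fixes f :: "'a::idom"
  assumes "f \<noteq> 0" and "\<not> f dvd 1"
  shows "(prime_mod (uv_rel f) var_u \<longleftrightarrow> prime_elem f) \<and>
         (prime_mod (uv_rel f) var_v \<longleftrightarrow> prime_elem f)"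
proof
  have "\<not> uv_rel f dvd var_u"
  proof
    assume "uv_rel f dvd var_u"
    then obtain k where "var_u = uv_rel f * k" by blast
    then have "coeff (coeff var_u 0) 1 = coeff (coeff (uv_rel f * k) 0) 1" by simp
    then have "1 = f * (- coeff (coeff k 0) 1)"
      by (simp add: coeff_mult_0 coeff0_m var_u_def)
    then show False using assms(2) by (metis dvdI)
  qed
  then show "prime_mod (uv_rel f) var_u \<longleftrightarrow> prime_elem f"
    using generic[of "uv_rel f" var_u f phi iota] dvd_mod_u phi_mult phi_one phi_iota assms(1)
    by blast
next
  have "\<not> uv_rel f dvd var_v"
  proof
    assume "uv_rel f dvd var_v"
    then obtain k where "var_v = uv_rel f * k" by blast
    then have "coeff (phi var_v) 1 = coeff (phi (uv_rel f * k)) 1" by simp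
    then have "1 = f * (- coeff (phi k) 1)"
      by (simp add: phi_mult phi_m phi_V)
    then show False using assms(2) by (metis dvdI)
  qed
  then show "prime_mod (uv_rel f) var_v \<longleftrightarrow> prime_elem f"
    using generic[of "uv_rel f" var_v f "\<lambda>P. coeff P 0" "\<lambda>g. [:g:]", OF dvd_mod_v coeff_mult_0]
      assms(1) by simp
qed

end
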